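(* A nondegenerate NSC $p$ satisfies Dissimilar Regularity if and only if it is an increasing NSC, i.e., it admits an NSC representation $(v,u,\{X_i\}_{i=1}^K)$ such that $v(A)\ge v(B)$ for every $i\le K$ and all nonempty $B\subseteq A\subseteq X_i$.
   Context: $X$ is a finite set, $\mathscr{A}$ the nonempty subsets; $p$ is a positive stochastic choice function; $A\cup y=A\cup\{y\}$. $a\sim_p b$ means $\frac{p(a,A)}{p(b,A)}=\frac{p(a,\{a,b\})}{p(b,\{a,b\})}$ for all $A\ni a,b$. NSC: there exist a partition $X_1,\dots,X_K$ of $X$, $u:X\to\mathbb{R}_{++}$, $v:\bigcup_i 2^{X_i}\to\mathbb{R}_+$ with $v(\emptyset)=0$, and $p(a,A)=\frac{v(A\cap X_i)}{\sum_j v(A\cap X_j)}\frac{u(a)}{\sum_{b\in A\cap X_i}u(b)}$ for $a\in A\cap X_i$. Nondegenerate: at most one $i$ for which some $a\in X_i$ satisfies $\frac{\sum_{x\in A_i}u(x)}{v(A_i)}=\frac{u(a)}{v(\{a\})}$ for all $A_i\subseteq X_i$ containing $a$. Dissimilar Regularity: for any $A\in\mathscr{A}$, $x\in A$ and $y\in X$ with $x\not\sim_p y$, $p(x,A\cup y)\le p(x,A)$. *)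

theory Defs
  imports Main "HOL-Library.Disjoint_Sets" Complex_Main
begin

definition pos_scf :: "'a set \<Rightarrow> ('a \<Rightarrow> 'a set \<Rightarrow> real) \<Rightarrow> bool" where
  "pos_scf X p \<longleftrightarrow> finite X \<and>
     (\<forall>A. A \<subseteq> X \<and> A \<noteq> {} \<longrightarrow> (\<forall>a\<in>A. p a A > 0) \<and> (\<Sum>a\<in>A. p a A) = 1)"

definition similar :: "'a set \<Rightarrow> ('a \<Rightarrow> 'a set \<Rightarrow> real) \<Rightarrow> 'a \<Rightarrow> 'a \<Rightarrow> bool" where
  "similar X p a b \<longleftrightarrow>
     (\<forall>A. A \<subseteq> X \<and> a \<in> A \<and> b \<in> A \<longrightarrow> p a A / p b A = p a {a, b} / p b {a, b})"

definition dissimilar_regularity :: "'a set \<Rightarrow> ('a \<Rightarrow> 'a set \<Rightarrow> real) \<Rightarrow> bool" where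
  "dissimilar_regularity X p \<longleftrightarrow>
     (\<forall>A x y. A \<subseteq> X \<and> A \<noteq> {} \<and> x \<in> A \<and> y \<in> X \<and> \<not> similar X p x y
        \<longrightarrow> p x (insert y A) \<le> p x A)"

text \<open>(v, u, P) is an NSC representation of p; the partition X_1..X_K is the
  set of blocks P, and v only matters on subsets of blocks.\<close>
definition nsc_rep :: "'a set \<Rightarrow> ('a \<Rightarrow> 'a set \<Rightarrow> real) \<Rightarrow> 'a set set
      \<Rightarrow> ('a \<Rightarrow> real) \<Rightarrow> ('a set \<Rightarrow> real) \<Rightarrow> bool" where
  "nsc_rep X p P u v \<longleftrightarrow>
     partition_on X P \<and>
     (\<forall>a\<in>X. u a > 0) \<and>
     v {} = 0 \<and>
     (\<forall>B\<in>P. \<forall>C. C \<subseteq> B \<longrightarrow> v C \<ge> 0) \<and>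
     (\<forall>A. A \<subseteq> X \<and> A \<noteq> {} \<longrightarrow> (\<forall>B\<in>P. \<forall>a\<in>A \<inter> B.
        p a A = v (A \<inter> B) / (\<Sum>C\<in>P. v (A \<inter> C)) * (u a / (\<Sum>b\<in>A \<inter> B. u b))))"

definition nsc_nondegenerate :: "'a set set \<Rightarrow> ('a \<Rightarrow> real) \<Rightarrow> ('a set \<Rightarrow> real) \<Rightarrow> bool" where
  "nsc_nondegenerate P u v \<longleftrightarrow>
     card {B \<in> P. \<exists>a\<in>B. \<forall>A. A \<subseteq> B \<and> a \<in> A \<longrightarrow>
            (\<Sum>x\<in>A. u x) / v A = u a / v {a}} \<le> 1"

definition nsc_increasing :: "'a set set \<Rightarrow> ('a set \<Rightarrow> real) \<Rightarrow> bool" where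
  "nsc_increasing P v \<longleftrightarrow>
     (\<forall>B\<in>P. \<forall>A C. C \<noteq> {} \<and> C \<subseteq> A \<and> A \<subseteq> B \<longrightarrow> v C \<le> v A)"

end

theory Submission
  imports Defs
begin

lemma h1: "(s::real) \<noteq> 0 \<Longrightarrow> b \<noteq> 0 \<Longrightarrow> c\<noteq>0 \<Longrightarrow> U\<noteq>0 \<Longrightarrow> (a/s)/(b/s*(c/U)) = a*U/(b*c)"
  by (simp add: field_simps)
lemma h2: "(s::real) \<noteq> 0 \<Longrightarrow> b \<noteq> 0 \<Longrightarrow> U\<noteq>0 \<Longrightarrow> (a/s*(c/U))/(b/s) = a*c/(U*b)"
  by (simp add: field_simps)

lemma rep_basic:
  assumes "nsc_rep X p P u v"
  shows "\<Union>P = X" "{} \<notin> P" "\<And>B C. B\<in>P \<Longrightarrow> C\<in>P \<Longrightarrow> B\<noteq>C \<Longrightarrow> B\<inter>C={}"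
    "\<And>a. a\<in>X \<Longrightarrow> u a > 0" "v {} = 0" "\<And>B C. B\<in>P \<Longrightarrow> C \<subseteq> B \<Longrightarrow> v C \<ge> 0"
    "\<And>A B a. A \<subseteq> X \<Longrightarrow> A \<noteq> {} \<Longrightarrow> B\<in>P \<Longrightarrow> a\<in>A \<Longrightarrow> a\<in>B \<Longrightarrow>
        p a A = v (A \<inter> B) / (\<Sum>C\<in>P. v (A \<inter> C)) * (u a / (\<Sum>b\<in>A \<inter> B. u b))"
  using assms unfolding nsc_rep_def partition_on_def
  by (auto dest: disjointD)

lemma rep_fin:
  assumes "pos_scf X p" "nsc_rep X p P u v"
  shows "finite X" "finite P"
proof -
  show fX: "finite X" using assms(1) pos_scf_def by blast
  have "P \<subseteq> Pow X" using rep_basic(1)[OF assms(2)] by blast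
  then show "finite P" using fX finite_subset by blast
qed

lemma rep_pos:
  assumes "pos_scf X p" "nsc_rep X p P u v" "A \<subseteq> X" "A \<noteq> {}" "B \<in> P" "a \<in> A" "a \<in> B"
  shows "v (A \<inter> B) > 0" "(\<Sum>C\<in>P. v (A \<inter> C)) > 0" "(\<Sum>b\<in>A \<inter> B. u b) > 0"
proof -
  note R = rep_basic[OF assms(2)]
  have fX: "finite X" using rep_fin[OF assms(1,2)] by blast
  have pp: "p a A > 0" using assms(1,3,4,6) unfolding pos_scf_def by blast
  have w0: "v (A \<inter> B) \<ge> 0" using R(6)[OF assms(5)] by blast
  have S0: "(\<Sum>C\<in>P. v (A \<inter> C)) \<ge> 0" by (rule sum_nonneg) (use R(6) in blast)
  have fin: "finite (A \<inter> B)" using fX assms(3) finite_subset by blast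
  show U: "(\<Sum>b\<in>A \<inter> B. u b) > 0"
    by (rule sum_pos[OF fin]) (use assms R(4) in auto)
  have eq: "p a A = v (A \<inter> B) / (\<Sum>C\<in>P. v (A \<inter> C)) * (u a / (\<Sum>b\<in>A \<inter> B. u b))"
    using R(7) assms by blast
  show "v (A \<inter> B) > 0"
  proof (rule ccontr)
    assume "\<not> ?thesis" then have "v (A \<inter> B) = 0" using w0 by linarith
    then show False using pp eq by simp
  qed
  show "(\<Sum>C\<in>P. v (A \<inter> C)) > 0"
  proof (rule ccontr)
    assume "\<not> ?thesis" then have "(\<Sum>C\<in>P. v (A \<inter> C)) = 0" using S0 by linarith
    then show False using pp eq by simp
  qed
qed

lemma two_sum:
  assumes "nsc_rep X p P u v" "finite P" "B \<in> P" "C \<in> P" "B \<noteq> C" "x \<in> B" "T \<subseteq> C"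
  shows "(\<Sum>D\<in>P. v (insert x T \<inter> D)) = v {x} + v T"
    "insert x T \<inter> B = {x}" "insert x T \<inter> C = T"
proof -
  note R = rep_basic[OF assms(1)]
  have BC: "B \<inter> C = {}" using R(3) assms by blast
  show iB: "insert x T \<inter> B = {x}" using BC assms by blast
  show iC: "insert x T \<inter> C = T" using BC assms by blast
  have z: "\<forall>D\<in>P - {B,C}. v (insert x T \<inter> D) = 0"
  proof
    fix D assume D: "D \<in> P - {B,C}"
    have "D \<inter> B = {}" "D \<inter> C = {}" using R(3) D assms by auto
    then have "insert x T \<inter> D = {}" using assms by blast
    then show "v (insert x T \<inter> D) = 0" using R(5) by simp
  qed
  have "(\<Sum>D\<in>P. v (insert x T \<inter> D)) = (\<Sum>D\<in>{B,C}. v (insert x T \<inter> D))"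
    by (rule sum.mono_neutral_right) (use assms z in auto)
  also have "\<dots> = v (insert x T \<inter> B) + v (insert x T \<inter> C)" using assms(5) by simp
  also have "\<dots> = v {x} + v T" by (simp only: iB iC)
  finally show "(\<Sum>D\<in>P. v (insert x T \<inter> D)) = v {x} + v T" .
qed

lemma p_two:
  assumes "nsc_rep X p P u v" "finite P" "B \<in> P" "C \<in> P" "B \<noteq> C" "x \<in> B" "T \<subseteq> C"
  shows "p x (insert x T) = v {x} / (v {x} + v T)"
    "\<And>y. y \<in> T \<Longrightarrow> p y (insert x T) = v T / (v {x} + v T) * (u y / (\<Sum>b\<in>T. u b))"
proof -
  note R = rep_basic[OF assms(1)]
  note S = two_sum[OF assms]
  have sub: "insert x T \<subseteq> X" using R(1) assms by blast
  have ux: "u x > 0" using R(4) sub by blast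
  have "p x (insert x T) = v (insert x T \<inter> B) / (\<Sum>D\<in>P. v (insert x T \<inter> D)) * (u x / (\<Sum>b\<in>insert x T \<inter> B. u b))"
    using R(7)[OF sub _ assms(3)] assms by blast
  then show "p x (insert x T) = v {x} / (v {x} + v T)" using S ux by simp
  fix y assume y: "y \<in> T"
  have "p y (insert x T) = v (insert x T \<inter> C) / (\<Sum>D\<in>P. v (insert x T \<inter> D)) * (u y / (\<Sum>b\<in>insert x T \<inter> C. u b))"
    using R(7)[OF sub _ assms(4)] assms y by blast
  then show "p y (insert x T) = v T / (v {x} + v T) * (u y / (\<Sum>b\<in>T. u b))" using S by simp
qed

lemma cross_dissimilar:
  assumes pos: "pos_scf X p" and rep: "nsc_rep X p P u v" and nd: "nsc_nondegenerate P u v"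
    and BC: "B \<in> P" "C \<in> P" "B \<noteq> C" and xy: "x \<in> B" "y \<in> C"
  shows "\<not> similar X p x y"
proof
  assume sim: "similar X p x y"
  note R = rep_basic[OF rep]
  have fP: "finite P" using rep_fin[OF pos rep] by blast
  have fX: "finite X" using rep_fin[OF pos rep] by blast
  have BX: "B \<subseteq> X" "C \<subseteq> X" using R(1) BC by blast+
  have vpos: "\<And>D T. D \<in> P \<Longrightarrow> T \<subseteq> D \<Longrightarrow> T \<noteq> {} \<Longrightarrow> v T > 0"
  proof -
    fix D T assume D: "D \<in> P" "T \<subseteq> D" "T \<noteq> {}"
    then obtain a where a: "a \<in> T" by blast
    have "T \<subseteq> X" using D R(1) by blast
    then have "v (T \<inter> D) > 0" using rep_pos(1)[OF pos rep _ _ D(1) a] D a by blast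
    then show "v T > 0" using D by (simp add: Int_absorb2)
  qed
  have Upos: "\<And>T. T \<subseteq> X \<Longrightarrow> T \<noteq> {} \<Longrightarrow> (\<Sum>b\<in>T. u b) > 0"
    by (rule sum_pos) (use fX finite_subset R(4) in auto)
  have vx: "v {x} > 0" using vpos[OF BC(1)] xy by blast
  have vy: "v {y} > 0" using vpos[OF BC(2)] xy by blast
  have ux: "u x > 0" "u y > 0" using R(4) BX xy by blast+
  have pair1: "p x {x,y} = v {x} / (v {x} + v {y})" "p y {x,y} = v {y} / (v {x} + v {y})"
    using p_two[OF rep fP BC xy(1), of "{y}"] xy ux by auto
  have pair2: "p y {x,y} = v {y} / (v {y} + v {x})" "p x {x,y} = v {x} / (v {y} + v {x})"
    using p_two[OF rep fP BC(2,1) _ xy(2), of "{x}"] BC xy ux by (auto simp: insert_commute)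
  have simeq: "\<And>A. A \<subseteq> X \<Longrightarrow> x \<in> A \<Longrightarrow> y \<in> A \<Longrightarrow> p x A / p y A = p x {x,y} / p y {x,y}"
    using sim unfolding similar_def by blast
  have rat: "p x {x,y} / p y {x,y} = v {x} / v {y}" unfolding pair1 
  proof -
    have ne: "v {x} + v {y} \<noteq> 0" using vx vy by linarith
    show "v {x} / (v {x} + v {y}) / (v {y} / (v {x} + v {y})) = v {x} / v {y}" using vx vy ne
      by (simp add: divide_simps)
  qed
  have degC: "C \<in> {D \<in> P. \<exists>a\<in>D. \<forall>A. A \<subseteq> D \<and> a \<in> A \<longrightarrow> (\<Sum>x\<in>A. u x) / v A = u a / v {a}}"
  proof -
    have "\<forall>A. A \<subseteq> C \<and> y \<in> A \<longrightarrow> (\<Sum>x\<in>A. u x) / v A = u y / v {y}"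
    proof (intro allI impI)
      fix A assume A: "A \<subseteq> C \<and> y \<in> A"
      have vA: "v A > 0" using vpos[OF BC(2)] A by blast
      have UA: "(\<Sum>b\<in>A. u b) > 0" using Upos A BX by blast
      have e1: "p x (insert x A) = v {x} / (v {x} + v A)" using p_two(1)[OF rep fP BC xy(1)] A by blast
      have e2: "p y (insert x A) = v A / (v {x} + v A) * (u y / (\<Sum>b\<in>A. u b))"
        using p_two(2)[OF rep fP BC xy(1)] A by blast
      have "p x (insert x A) / p y (insert x A) = v {x} / v {y}"
        using simeq[of "insert x A"] rat A BX xy by auto
      then have "v {x} / (v {x} + v A) / (v A / (v {x} + v A) * (u y / (\<Sum>b\<in>A. u b))) = v {x} / v {y}"
        using e1 e2 by simp
      moreover have "v {x} / (v {x} + v A) / (v A / (v {x} + v A) * (u y / (\<Sum>b\<in>A. u b)))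
          = v {x} * (\<Sum>b\<in>A. u b) / (v A * u y)"
      proof -
        have "v {x} + v A \<noteq> 0" using vA vx by linarith
        then show ?thesis using vA UA vx vy ux by (intro h1) auto
      qed
      ultimately have "v {x} * (\<Sum>b\<in>A. u b) / (v A * u y) = v {x} / v {y}" by metis
      then have "v {x} * (\<Sum>b\<in>A. u b) * v {y} = v {x} * (v A * u y)"
        using vA UA vx vy ux by (simp add: divide_simps)
      then have "(\<Sum>b\<in>A. u b) * v {y} = v A * u y" using vx by simp
      then show "(\<Sum>x\<in>A. u x) / v A = u y / v {y}" using vA UA vx vy ux
        by (simp add: divide_simps)
    qed
    then show ?thesis using BC xy by blast
  qed
  have degB: "B \<in> {D \<in> P. \<exists>a\<in>D. \<forall>A. A \<subseteq> D \<and> a \<in> A \<longrightarrow> (\<Sum>x\<in>A. u x) / v A = u a / v {a}}"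
  proof -
    have "\<forall>A. A \<subseteq> B \<and> x \<in> A \<longrightarrow> (\<Sum>x\<in>A. u x) / v A = u x / v {x}"
    proof (intro allI impI)
      fix A assume A: "A \<subseteq> B \<and> x \<in> A"
      have vA: "v A > 0" using vpos[OF BC(1)] A by blast
      have UA: "(\<Sum>b\<in>A. u b) > 0" using Upos A BX by blast
      have e1: "p y (insert y A) = v {y} / (v {y} + v A)" using p_two(1)[OF rep fP BC(2,1) _ xy(2)] A BC by blast
      have e2: "p x (insert y A) = v A / (v {y} + v A) * (u x / (\<Sum>b\<in>A. u b))"
        using p_two(2)[OF rep fP BC(2,1) _ xy(2)] A BC by blast
      have "p x (insert y A) / p y (insert y A) = v {x} / v {y}"
        using simeq[of "insert y A"] rat A BX xy by auto
      then have "(v A / (v {y} + v A) * (u x / (\<Sum>b\<in>A. u b))) / (v {y} / (v {y} + v A)) = v {x} / v {y}"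
        using e1 e2 by simp
      moreover have "(v A / (v {y} + v A) * (u x / (\<Sum>b\<in>A. u b))) / (v {y} / (v {y} + v A))
          = v A * u x / ((\<Sum>b\<in>A. u b) * v {y})"
      proof -
        have "v {y} + v A \<noteq> 0" using vA vy by linarith
        then show ?thesis using vA UA vx vy ux by (intro h2) auto
      qed
      ultimately have "v A * u x / ((\<Sum>b\<in>A. u b) * v {y}) = v {x} / v {y}" by metis
      then have "v A * u x * v {y} = v {x} * ((\<Sum>b\<in>A. u b) * v {y})"
        using vA UA vx vy ux by (simp add: divide_simps)
      then have "v A * u x = v {x} * (\<Sum>b\<in>A. u b)" using vy by simp
      then show "(\<Sum>x\<in>A. u x) / v A = u x / v {x}" using vA UA vx vy ux
        by (simp add: divide_simps mult.commute)
    qed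
    then show ?thesis using BC xy by blast
  qed
  let ?D = "{D \<in> P. \<exists>a\<in>D. \<forall>A. A \<subseteq> D \<and> a \<in> A \<longrightarrow> (\<Sum>x\<in>A. u x) / v A = u a / v {a}}"
  have "card {B, C} \<le> card ?D" by (rule card_mono) (use fP degB degC in auto)
  then have "2 \<le> card ?D" using BC by simp
  then show False using nd unfolding nsc_nondegenerate_def by linarith
qed

lemma h3: "(w::real) \<noteq> 0 \<Longrightarrow> S \<noteq> 0 \<Longrightarrow> U \<noteq> 0 \<Longrightarrow> b \<noteq> 0 \<Longrightarrow> (w/S*(a/U))/(w/S*(b/U)) = a/b"
  by (simp add: field_simps)

lemma same_ratio:
  assumes pos: "pos_scf X p" and rep: "nsc_rep X p P u v" and A: "A \<subseteq> X" "x \<in> A" "y \<in> A"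
    and B: "B \<in> P" "x \<in> B" "y \<in> B"
  shows "p x A / p y A = u x / u y"
proof -
  note R = rep_basic[OF rep]
  have ne: "A \<noteq> {}" using A by blast
  have ex: "p x A = v (A \<inter> B) / (\<Sum>C\<in>P. v (A \<inter> C)) * (u x / (\<Sum>b\<in>A \<inter> B. u b))"
    using R(7)[OF A(1) ne B(1)] A B by blast
  have ey: "p y A = v (A \<inter> B) / (\<Sum>C\<in>P. v (A \<inter> C)) * (u y / (\<Sum>b\<in>A \<inter> B. u b))"
    using R(7)[OF A(1) ne B(1)] A B by blast
  note P = rep_pos[OF pos rep A(1) ne B(1) A(2) B(2)]
  have "u y > 0" using R(4) A by blast
  then show ?thesis unfolding ex ey using P by (intro h3) auto
qed

lemma chain_mono:
  assumes step: "\<And>T y. T \<subseteq> C \<Longrightarrow> y \<in> C \<Longrightarrow> y \<notin> T \<Longrightarrow> v T \<le> (v (insert y T) :: real)"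
  and "finite F" shows "F \<subseteq> C \<Longrightarrow> C' \<subseteq> C \<Longrightarrow> v C' \<le> v (C' \<union> F)"
  using assms(2)
proof (induction F rule: finite_induct)
  case empty then show ?case by simp
next
  case (insert z F)
  then have 1: "v C' \<le> v (C' \<union> F)" by blast
  show ?case
  proof (cases "z \<in> C' \<union> F")
    case True
    then have "C' \<union> insert z F = C' \<union> F" by blast
    then show ?thesis using 1 by simp
  next
    case False
    have "v (C' \<union> F) \<le> v (insert z (C' \<union> F))"
      by (rule step) (use insert.prems False in auto)
    then show ?thesis using 1 by simp
  qed
qed

theorem proposition8:
  fixes X :: "'a set" and p :: "'a \<Rightarrow> 'a set \<Rightarrow> real"
  assumes "pos_scf X p"
    and "\<exists>P u v. nsc_rep X p P u v \<and> nsc_nondegenerate P u v"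
  shows "dissimilar_regularity X p \<longleftrightarrow>
           (\<exists>P u v. nsc_rep X p P u v \<and> nsc_increasing P v)"
proof
  assume DR: "dissimilar_regularity X p"
  obtain P0 u0 v0 where rep0: "nsc_rep X p P0 u0 v0" and nd: "nsc_nondegenerate P0 u0 v0"
    using assms(2) by blast
  note R = rep_basic[OF rep0]
  have fP: "finite P0" using rep_fin[OF assms(1) rep0] by blast
  show "\<exists>P u v. nsc_rep X p P u v \<and> nsc_increasing P v"
  proof (cases "\<exists>C\<in>P0. \<forall>B\<in>P0. B = C")
    case True
    then obtain C where C: "C \<in> P0" "\<forall>B\<in>P0. B = C" by blast
    then have P0: "P0 = {C}" by blast
    then have CX: "C = X" using R(1) by simp
    define v' where "v' = (\<lambda>S::'a set. if S = {} then 0 else (1::real))"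
    have "nsc_rep X p P0 u0 v'"
      unfolding nsc_rep_def
    proof (intro conjI allI impI ballI)
      show "partition_on X P0" using rep0 nsc_rep_def by blast
    next
      fix a assume "a \<in> X" then show "u0 a > 0" using R(4) by blast
    next
      show "v' {} = 0" by (simp add: v'_def)
    next
      fix B S assume "B \<in> P0" "S \<subseteq> B" then show "0 \<le> v' S" by (simp add: v'_def)
    next
      fix A B a assume A: "A \<subseteq> X \<and> A \<noteq> {}" and B: "B \<in> P0" and a: "a \<in> A \<inter> B"
      have BX: "B = X" using B P0 CX by simp
      have eq: "p a A = v0 (A \<inter> B) / (\<Sum>D\<in>P0. v0 (A \<inter> D)) * (u0 a / (\<Sum>b\<in>A \<inter> B. u0 b))"
        using R(7)[of A B a] A B a by blast
      have vp: "v0 (A \<inter> B) > 0" using rep_pos(1)[OF assms(1) rep0 _ _ B, of A a] A a by blast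
      have "p a A = u0 a / (\<Sum>b\<in>A \<inter> B. u0 b)" using eq vp unfolding P0 BX
        using BX P0 CX by simp
      then show "p a A = v' (A \<inter> B) / (\<Sum>D\<in>P0. v' (A \<inter> D)) * (u0 a / (\<Sum>b\<in>A \<inter> B. u0 b))"
        using A BX P0 CX by (simp add: v'_def Int_absorb2)
    qed
    moreover have "nsc_increasing P0 v'" unfolding nsc_increasing_def v'_def by auto
    ultimately show ?thesis by blast
  next
    case False
    then have other: "\<And>C. C \<in> P0 \<Longrightarrow> \<exists>B\<in>P0. B \<noteq> C" by blast
    have "nsc_increasing P0 v0" unfolding nsc_increasing_def
    proof (intro ballI allI impI)
      fix B A C' assume B: "B \<in> P0" and CA: "C' \<noteq> {} \<and> C' \<subseteq> A \<and> A \<subseteq> B"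
      have step: "v0 T \<le> v0 (insert y T)" if T: "T \<subseteq> B" "y \<in> B" "y \<notin> T" for T y
      proof -
        obtain B' where B': "B' \<in> P0" "B' \<noteq> B" using other[OF B] by blast
        then obtain x where x: "x \<in> B'" using R(2) by (metis all_not_in_conv)
        have ns: "\<not> similar X p x y" using cross_dissimilar[OF assms(1) rep0 nd B'(1) B B'(2) x T(2)] by blast
        have BX: "B \<subseteq> X" "B' \<subseteq> X" using R(1) B B' by blast+
        have pre: "insert x T \<subseteq> X \<and> insert x T \<noteq> {} \<and> x \<in> insert x T \<and> y \<in> X \<and> \<not> similar X p x y"
          using ns T BX x by blast
        have "p x (insert y (insert x T)) \<le> p x (insert x T)"
          by (rule DR[unfolded dissimilar_regularity_def, rule_format, OF pre])
        moreover have "insert y (insert x T) = insert x (insert y T)" by blast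
        ultimately have le: "p x (insert x (insert y T)) \<le> p x (insert x T)" by simp
        have e1: "p x (insert x T) = v0 {x} / (v0 {x} + v0 T)"
          using p_two(1)[OF rep0 fP B'(1) B B'(2) x T(1)] .
        have e2: "p x (insert x (insert y T)) = v0 {x} / (v0 {x} + v0 (insert y T))"
          using p_two(1)[OF rep0 fP B'(1) B B'(2) x] T by blast
        have vx: "v0 {x} > 0"
          using rep_pos(1)[OF assms(1) rep0 _ _ B'(1), of "{x}" x] x BX by auto
        have vT: "v0 T \<ge> 0" "v0 (insert y T) \<ge> 0" using R(6)[OF B] T by auto
        show ?thesis
        proof (rule ccontr)
          assume "\<not> ?thesis"
          then have "v0 {x} + v0 (insert y T) < v0 {x} + v0 T" by simp
          then have "v0 {x} / (v0 {x} + v0 T) < v0 {x} / (v0 {x} + v0 (insert y T))"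
            using vx vT by (intro divide_strict_left_mono) auto
          then show False using le e1 e2 by simp
        qed
      qed
      have BX0: "B \<subseteq> X" using R(1) B by blast
      have fB: "finite B" using finite_subset[OF BX0 rep_fin(1)[OF assms(1) rep0]] .
      have "v0 C' \<le> v0 (C' \<union> (A - C'))"
      proof (rule chain_mono[of B v0])
        show "\<And>T y. T \<subseteq> B \<Longrightarrow> y \<in> B \<Longrightarrow> y \<notin> T \<Longrightarrow> v0 T \<le> v0 (insert y T)" using step by blast
        show "finite (A - C')" using fB CA by (meson Diff_subset finite_subset)
        show "A - C' \<subseteq> B" "C' \<subseteq> B" using CA by blast+
      qed
      moreover have "C' \<union> (A - C') = A" using CA by blast
      ultimately show "v0 C' \<le> v0 A" by simp
    qed
    with rep0 show ?thesis by (intro exI conjI)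
  qed
next
  assume "\<exists>P u v. nsc_rep X p P u v \<and> nsc_increasing P v"
  then obtain P u v where rep: "nsc_rep X p P u v" and inc: "nsc_increasing P v" by blast
  note R = rep_basic[OF rep]
  have fP: "finite P" using rep_fin[OF assms(1) rep] by blast
  show "dissimilar_regularity X p" unfolding dissimilar_regularity_def
  proof (intro allI impI)
    fix A x y assume H: "A \<subseteq> X \<and> A \<noteq> {} \<and> x \<in> A \<and> y \<in> X \<and> \<not> similar X p x y"
    show "p x (insert y A) \<le> p x A"
    proof (cases "y \<in> A")
      case True then show ?thesis by (simp add: insert_absorb)
    next
      case yA: False
      obtain B where B: "B \<in> P" "x \<in> B" using R(1) H by blast
      obtain C where C: "C \<in> P" "y \<in> C" using R(1) H by blast
      have BC: "B \<noteq> C"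
      proof
        assume "B = C"
        have "similar X p x y" unfolding similar_def
        proof (intro allI impI)
          fix A' assume A': "A' \<subseteq> X \<and> x \<in> A' \<and> y \<in> A'"
          have "p x A' / p y A' = u x / u y"
            using same_ratio[OF assms(1) rep, of A' x y B] A' B C \<open>B = C\<close> by blast
          moreover have "p x {x,y} / p y {x,y} = u x / u y"
            using same_ratio[OF assms(1) rep, of "{x,y}" x y B] H B C \<open>B = C\<close> by blast
          ultimately show "p x A' / p y A' = p x {x, y} / p y {x, y}" by simp
        qed
        then show False using H by blast
      qed
      have yB: "y \<notin> B" using R(3)[OF B(1) C(1) BC] C by blast
      have iA: "insert y A \<subseteq> X" "insert y A \<noteq> {}" "x \<in> insert y A" using H by auto
      have e1: "p x A = v (A \<inter> B) / (\<Sum>D\<in>P. v (A \<inter> D)) * (u x / (\<Sum>b\<in>A \<inter> B. u b))"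
        using R(7)[of A B x] H B by blast
      have e2: "p x (insert y A) = v (insert y A \<inter> B) / (\<Sum>D\<in>P. v (insert y A \<inter> D)) * (u x / (\<Sum>b\<in>insert y A \<inter> B. u b))"
        using R(7)[OF iA(1,2) B(1) iA(3) B(2)] .
      have same: "insert y A \<inter> B = A \<inter> B" using yB by blast
      have Spos: "(\<Sum>D\<in>P. v (A \<inter> D)) > 0" using rep_pos(2)[OF assms(1) rep _ _ B(1), of A x] H B by blast
      have wnn: "v (A \<inter> B) \<ge> 0" using R(6)[OF B(1)] by blast
      have Upos: "(\<Sum>b\<in>A \<inter> B. u b) > 0" using rep_pos(3)[OF assms(1) rep _ _ B(1), of A x] H B by blast
      have ux: "u x > 0" using R(4) H by blast
      have mono: "(\<Sum>D\<in>P. v (A \<inter> D)) \<le> (\<Sum>D\<in>P. v (insert y A \<inter> D))"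
      proof (rule sum_mono)
        fix D assume D: "D \<in> P"
        show "v (A \<inter> D) \<le> v (insert y A \<inter> D)"
        proof (cases "y \<in> D")
          case False then have "insert y A \<inter> D = A \<inter> D" by blast
          then show ?thesis by simp
        next
          case True
          show ?thesis
          proof (cases "A \<inter> D = {}")
            case True then show ?thesis using R(5) R(6)[OF D, of "insert y A \<inter> D"] by auto
          next
            case False
            moreover have "A \<inter> D \<subseteq> insert y A \<inter> D" "insert y A \<inter> D \<subseteq> D" by blast+
            moreover have "A \<inter> D \<noteq> {}" using False .
            ultimately show ?thesis using inc[unfolded nsc_increasing_def, rule_format, OF D, of "A \<inter> D" "insert y A \<inter> D"] by blast
          qed
        qed
      qed
      have "v (A \<inter> B) / (\<Sum>D\<in>P. v (insert y A \<inter> D)) \<le> v (A \<inter> B) / (\<Sum>D\<in>P. v (A \<inter> D))"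
        using mono Spos wnn by (intro divide_left_mono) auto
      then have "v (A \<inter> B) / (\<Sum>D\<in>P. v (insert y A \<inter> D)) * (u x / (\<Sum>b\<in>A \<inter> B. u b))
          \<le> v (A \<inter> B) / (\<Sum>D\<in>P. v (A \<inter> D)) * (u x / (\<Sum>b\<in>A \<inter> B. u b))"
        using ux Upos by (intro mult_right_mono) auto
      then show ?thesis unfolding e1 e2 same .
    qed
  qed
qed

end
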